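(* Let $\ell\le D/8$. There is a non-adaptive deterministic group testing algorithm that, when an integer $D$ with $d/4\le D\le 4d$ is known in advance to the algorithm, detects $\ell$ defective items among any defective set $I\subseteq[n]$ of size $d$ and makes $O(d\log(n/d))$ tests.
   Context: Group testing: items $X=[n]$, unknown defective set $I\subseteq X$ with $d=|I|$. A test $Q\subseteq X$ has answer $1$ if $Q\cap I\neq\emptyset$ and $0$ otherwise; the algorithm accesses $I$ only through tests. A non-adaptive algorithm fixes all its tests in advance (they do not depend on answers), then computes its output from the answers. "Detects $\ell$ defective items" means it outputs $L\subseteq I$ with $|L|=\ell$. Logarithms are base 2. *)

theory Defs
  imports Complex_Main
begin

definition test_answer :: "nat set \<Rightarrow> nat set \<Rightarrow> bool" where
  "test_answer I Q \<longleftrightarrow> Q \<inter> I \<noteq> {}"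

text \<open>A non-adaptive deterministic algorithm on [n] is a fixed list of tests Qs
  (each a subset of [n]) together with a decoder f mapping the answer vector to an output.\<close>

definition nonadaptive_alg :: "nat \<Rightarrow> nat set list \<Rightarrow> bool" where
  "nonadaptive_alg n Qs \<longleftrightarrow> (\<forall>Q\<in>set Qs. Q \<subseteq> {1..n})"

definition alg_output :: "nat set list \<Rightarrow> (bool list \<Rightarrow> nat set) \<Rightarrow> nat set \<Rightarrow> nat set" where
  "alg_output Qs f I = f (map (test_answer I) Qs)"

definition detects :: "nat set list \<Rightarrow> (bool list \<Rightarrow> nat set) \<Rightarrow> nat \<Rightarrow> nat set \<Rightarrow> bool" where
  "detects Qs f l I \<longleftrightarrow> alg_output Qs f I \<subseteq> I \<and> card (alg_output Qs f I) = l"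

end

theory Submission
  imports Defs "HOL-Library.FuncSet"
begin

definition Ev :: "nat set \<Rightarrow> nat set \<Rightarrow> nat \<Rightarrow> nat \<Rightarrow> (nat \<Rightarrow> nat) set" where
  "Ev A U B x = PiE A (\<lambda>a. if a = x then {0} else if a \<in> U then {1..<B} else {0..<B})"

lemma card_Ev:
  assumes "finite A" "U \<subseteq> A" "x \<in> U"
  shows "card (Ev A U B x) = (B-1)^(card U - 1) * B^(card A - card U)"
proof -
  define f where "f = (\<lambda>a. card (if a = x then {0} else if a \<in> U then {1..<B} else {0..<(B::nat)}))"
  have fU: "finite U" using assms finite_subset by blast
  have "card (Ev A U B x) = prod f A" unfolding Ev_def f_def using assms(1) by (rule card_PiE)
  also have "\<dots> = prod f U * prod f (A - U)"
    using assms fU by (metis Int_absorb1 prod.Int_Diff)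
  also have "prod f (A - U) = prod (\<lambda>_. B) (A - U)"
    by (rule prod.cong) (use assms(3) in \<open>auto simp: f_def\<close>)
  also have "\<dots> = B^(card A - card U)"
    using assms fU by (simp add: card_Diff_subset)
  also have "prod f U = f x * prod f (U - {x})"
    using assms fU by (simp add: prod.remove)
  also have "f x = 1" by (simp add: f_def)
  also have "prod f (U - {x}) = prod (\<lambda>_. B - 1) (U - {x})"
    by (rule prod.cong) (auto simp: f_def)
  also have "\<dots> = (B-1)^(card U - 1)"
    using assms fU by (simp add: card_Diff_singleton)
  finally show ?thesis by simp
qed
lemma Ev_val:
  assumes "g \<in> Ev A U B x" "a \<in> A"
  shows "g a \<in> (if a = x then {0} else if a \<in> U then {1..<B} else {0..<B})"
  using PiE_mem[OF assms(1)[unfolded Ev_def] assms(2)] .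

lemma Ev_F: "0 < B \<Longrightarrow> Ev A U B x \<subseteq> PiE A (\<lambda>_. {0..<B})"
  unfolding Ev_def by (rule PiE_mono) auto

lemma Ev_sub:
  assumes "0 < B" "x \<in> S" "S \<subseteq> U" "U \<subseteq> A"
  shows "Ev A U B x \<subseteq> {g \<in> PiE A (\<lambda>_. {0..<B}). \<exists>x\<in>S. g x = 0 \<and> (\<forall>w\<in>U-{x}. g w \<noteq> 0)}"
proof
  fix g assume g: "g \<in> Ev A U B x"
  have "x \<in> A" using assms by auto
  then have "g x = 0" using Ev_val[OF g \<open>x \<in> A\<close>] by simp
  moreover have "\<forall>w\<in>U-{x}. g w \<noteq> 0"
  proof
    fix w assume "w \<in> U - {x}"
    then have "w \<in> A" "w \<noteq> x" "w \<in> U" using assms by auto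
    then have "g w \<in> {1..<B}" using Ev_val[OF g \<open>w \<in> A\<close>] by simp
    then show "g w \<noteq> 0" by simp
  qed
  moreover have "g \<in> PiE A (\<lambda>_. {0..<B})" using g Ev_F[OF assms(1)] by blast
  ultimately show "g \<in> {g \<in> PiE A (\<lambda>_. {0..<B}). \<exists>x\<in>S. g x = 0 \<and> (\<forall>w\<in>U-{x}. g w \<noteq> 0)}"
    using assms(2) by blast
qed

lemma good_count:
  fixes A U S :: "nat set"
  assumes "0 < B" "finite A" "U \<subseteq> A" "S \<subseteq> U"
  shows "card S * ((B-1)^(card U - 1) * B^(card A - card U))
     \<le> card {g \<in> PiE A (\<lambda>_. {0..<B}). \<exists>x\<in>S. g x = 0 \<and> (\<forall>w\<in>U-{x}. g w \<noteq> 0)}"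
proof -
  have "S \<subseteq> A" using assms(3,4) by blast
  then have fS: "finite S" using assms(2) by (rule finite_subset)
  have disj: "\<forall>i\<in>S. \<forall>j\<in>S. i \<noteq> j \<longrightarrow> Ev A U B i \<inter> Ev A U B j = {}"
  proof (intro ballI impI)
    fix i j assume ij: "i \<in> S" "j \<in> S" "i \<noteq> j"
    show "Ev A U B i \<inter> Ev A U B j = {}"
    proof (rule ccontr)
      assume "Ev A U B i \<inter> Ev A U B j \<noteq> {}"
      then obtain g where g: "g \<in> Ev A U B i" "g \<in> Ev A U B j" by blast
      have iA: "i \<in> A" "i \<in> U" using ij assms(3,4) by auto
      have "g i = 0" using Ev_val[OF g(1) iA(1)] by simp
      moreover have "g i \<in> {1..<B}" using Ev_val[OF g(2) iA(1)] iA ij by simp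
      ultimately show False by simp
    qed
  qed
  have fin: "\<forall>i\<in>S. finite (Ev A U B i)" unfolding Ev_def using assms(2) by (intro ballI finite_PiE) simp_all
  have "card S * ((B-1)^(card U - 1) * B^(card A - card U)) = (\<Sum>i\<in>S. card (Ev A U B i))"
  proof -
    have "\<forall>i\<in>S. card (Ev A U B i) = (B-1)^(card U - 1) * B^(card A - card U)"
      using card_Ev[OF assms(2,3)] assms(4) by blast
    then have "(\<Sum>i\<in>S. card (Ev A U B i)) = (\<Sum>i\<in>S. (B-1)^(card U - 1) * B^(card A - card U))"
      by (intro sum.cong refl) blast
    then show ?thesis by simp
  qed
  also have "\<dots> = card (\<Union>(Ev A U B ` S))" by (rule card_UN_disjoint[OF fS fin disj, symmetric])
  also have "\<dots> \<le> card {g \<in> PiE A (\<lambda>_. {0..<B}). \<exists>x\<in>S. g x = 0 \<and> (\<forall>w\<in>U-{x}. g w \<noteq> 0)}"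
  proof (rule card_mono)
    show "finite {g \<in> PiE A (\<lambda>_. {0..<B}). \<exists>x\<in>S. g x = 0 \<and> (\<forall>w\<in>U-{x}. g w \<noteq> 0)}"
    proof (rule finite_subset)
      show "finite (PiE A (\<lambda>_. {0..<B}))" using assms(2) by (rule finite_PiE) simp
    qed blast
    show "\<Union>(Ev A U B ` S) \<subseteq> {g \<in> PiE A (\<lambda>_. {0..<B}). \<exists>x\<in>S. g x = 0 \<and> (\<forall>w\<in>U-{x}. g w \<noteq> 0)}"
      using Ev_sub[OF assms(1) _ assms(4,3)] by (intro UN_least) blast
  qed
  finally show ?thesis .
qed

lemma card_F: "card (PiE {1..n} (\<lambda>_. {0..<B::nat})) = B^n"
  by (simp add: card_PiE)

lemma card_pairs:
  fixes A :: "nat set"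
  assumes "finite A"
  shows "card {(U,S). U \<subseteq> A \<and> card U = K \<and> S \<subseteq> U \<and> card S = s0} \<le> (card A choose K) * 2^K"
proof -
  let ?X = "{U. U \<subseteq> A \<and> card U = K}"
  have finX: "finite ?X" using assms by (simp add: finite_Collect_subsets)
  have sub: "{(U,S). U \<subseteq> A \<and> card U = K \<and> S \<subseteq> U \<and> card S = s0} \<subseteq> Sigma ?X Pow" by auto
  have finS: "finite (Sigma ?X Pow)"
  proof (rule finite_SigmaI[OF finX])
    fix U assume "U \<in> ?X"
    then have "finite U" using assms by (metis (mono_tags, lifting) mem_Collect_eq rev_finite_subset)
    then show "finite (Pow U)" by simp
  qed
  have "card {(U,S). U \<subseteq> A \<and> card U = K \<and> S \<subseteq> U \<and> card S = s0} \<le> card (Sigma ?X Pow)"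
    by (rule card_mono[OF finS sub])
  also have "card (Sigma ?X Pow) = (\<Sum>U\<in>?X. card (Pow U))"
  proof (rule card_SigmaI[OF finX], rule ballI)
    fix U assume "U \<in> ?X"
    then have "finite U" using assms by (metis (mono_tags, lifting) mem_Collect_eq rev_finite_subset)
    then show "finite (Pow U)" by simp
  qed
  also have "\<dots> = (\<Sum>U\<in>?X. 2^K)"
  proof (rule sum.cong[OF refl])
    fix U assume U: "U \<in> ?X"
    then have "finite U" using assms by (metis (mono_tags, lifting) mem_Collect_eq rev_finite_subset)
    then show "card (Pow U) = 2^K" using U by (simp add: card_Pow)
  qed
  also have "\<dots> = (card A choose K) * 2^K" using n_subsets[OF assms, of K] by simp
  finally show ?thesis .
qed

lemma design_exists:
  fixes n m B K s0 :: nat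
  assumes B: "0 < B"
  and frac: "B^n \<le> 256 * (s0 * ((B-1)^(K - 1) * B^(n - K)))"
  and cnt: "real (n choose K) * 2^K * (255/256)^m < 1"
  shows "\<exists>G::nat \<Rightarrow> nat \<Rightarrow> nat. \<forall>U S. U \<subseteq> {1..n} \<and> card U = K \<and> S \<subseteq> U \<and> card S = s0 \<longrightarrow>
            (\<exists>i<m. \<exists>x\<in>S. G i x = 0 \<and> (\<forall>w\<in>U-{x}. G i w \<noteq> 0))"
proof (rule ccontr)
  assume H: "\<not> ?thesis"
  define A where "A = {1..n}"
  define F where "F = PiE A (\<lambda>_. {0..<B})"
  define good where "good = (\<lambda>U S (g::nat\<Rightarrow>nat). \<exists>x\<in>S. g x = 0 \<and> (\<forall>w\<in>U-{x}. g w \<noteq> 0))"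
  define P where "P = {(U,S). U \<subseteq> A \<and> card U = K \<and> S \<subseteq> U \<and> card S = s0}"
  define DS where "DS = PiE {..<m} (\<lambda>_. F)"
  define Bad where "Bad = (\<lambda>(U,S). PiE {..<m} (\<lambda>_. {g\<in>F. \<not> good U S g}))"
  have finA: "finite A" unfolding A_def by simp
  have finF: "finite F" unfolding F_def using finA by (rule finite_PiE) simp
  have cardF: "card F = B^n" unfolding F_def A_def by (rule card_F)
  have cardDS: "card DS = (B^n)^m" unfolding DS_def by (simp add: card_PiE cardF)
  have finP: "finite P"
  proof (rule finite_subset)
    show "P \<subseteq> Pow A \<times> Pow A" unfolding P_def by auto
    show "finite (Pow A \<times> Pow A)" using finA by simp
  qed
  have cardP: "card P \<le> (n choose K) * 2^K"
    using card_pairs[OF finA, of K s0] unfolding P_def A_def by simp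
  have cover: "DS \<subseteq> (\<Union>p\<in>P. Bad p)"
  proof
    fix G assume G: "G \<in> DS"
    from H obtain U S where US: "U \<subseteq> {1..n}" "card U = K" "S \<subseteq> U" "card S = s0"
      and nb: "\<not> (\<exists>i<m. \<exists>x\<in>S. G i x = 0 \<and> (\<forall>w\<in>U-{x}. G i w \<noteq> 0))"
      by blast
    have "(U,S) \<in> P" unfolding P_def A_def using US by simp
    moreover have "G \<in> Bad (U,S)"
      unfolding Bad_def using G nb unfolding DS_def good_def by (auto simp: PiE_iff)
    ultimately show "G \<in> (\<Union>p\<in>P. Bad p)" by blast
  qed
  have badc: "real (card (Bad p)) \<le> (real (B^n) * (255/256))^m" if p: "p \<in> P" for p
  proof -
    obtain U S where pUS: "p = (U,S)" by (cases p)
    have US: "U \<subseteq> A" "card U = K" "S \<subseteq> U" "card S = s0" using p pUS unfolding P_def by auto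
    let ?G = "{g\<in>F. good U S g}"
    let ?N = "{g\<in>F. \<not> good U S g}"
    have "s0 * ((B-1)^(K - 1) * B^(n - K)) \<le> card ?G"
      using good_count[OF B finA US(1) US(3)] US unfolding F_def good_def A_def by simp
    then have g256: "real (B^n) \<le> 256 * real (card ?G)" using frac
      by (metis (mono_tags, lifting) le_trans of_nat_le_iff of_nat_mult of_nat_numeral mult_le_mono2)
    have "card ?N + card ?G = card F"
    proof -
      have "?N \<union> ?G = F" by blast
      moreover have "?N \<inter> ?G = {}" by blast
      moreover have "finite ?N" "finite ?G" using finF by simp_all
      ultimately show ?thesis by (metis card_Un_disjoint)
    qed
    then have "real (card ?N) = real (B^n) - real (card ?G)" using cardF by linarith
    then have Nb: "real (card ?N) \<le> real (B^n) * (255/256)" using g256 by linarith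
    have "card (Bad p) = card ?N ^ m" unfolding Bad_def pUS by (simp add: card_PiE)
    then have "real (card (Bad p)) = real (card ?N) ^ m" by simp
    also have "\<dots> \<le> (real (B^n) * (255/256))^m" by (rule power_mono[OF Nb]) simp
    finally show ?thesis .
  qed
  have "real (card DS) \<le> real (card (\<Union>p\<in>P. Bad p))"
  proof -
    have "finite (\<Union>p\<in>P. Bad p)"
    proof (rule finite_UN_I[OF finP])
      fix p assume "p \<in> P"
      show "finite (Bad p)" unfolding Bad_def using finF by (cases p) (auto intro!: finite_PiE)
    qed
    then show ?thesis using cover card_mono by (metis of_nat_le_iff)
  qed
  also have "\<dots> \<le> real (\<Sum>p\<in>P. card (Bad p))" using card_UN_le[OF finP, of Bad] by linarith
  also have "\<dots> = (\<Sum>p\<in>P. real (card (Bad p)))" by simp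
  also have "\<dots> \<le> (\<Sum>p\<in>P. (real (B^n) * (255/256))^m)" by (rule sum_mono) (rule badc)
  also have "\<dots> = real (card P) * (real (B^n) * (255/256))^m" by simp
  also have "\<dots> \<le> real ((n choose K) * 2^K) * (real (B^n) * (255/256))^m"
  proof (rule mult_right_mono)
    show "real (card P) \<le> real ((n choose K) * 2^K)" using cardP by (simp only: of_nat_le_iff)
  qed simp
  also have "\<dots> = (real (n choose K) * 2^K * (255/256)^m) * real (B^n)^m"
    unfolding power_mult_distrib of_nat_mult of_nat_power of_nat_numeral by (simp only: mult_ac)
  also have "\<dots> < real (B^n)^m"
  proof -
    have "0 < real (B^n)^m" using B by simp
    then show ?thesis using cnt by simp
  qed
  finally show False using cardDS by simp
qed

lemma fact_bound: "real K ^ K / fact K \<le> exp (real K)"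
proof -
  have s: "(\<lambda>n. real K ^ n /\<^sub>R fact n) sums exp (real K)" by (rule exp_converges)
  have "sum (\<lambda>n. real K ^ n /\<^sub>R fact n) {K} \<le> suminf (\<lambda>n. real K ^ n /\<^sub>R fact n)"
    by (rule sum_le_suminf) (use s sums_summable in auto)
  then show ?thesis using sums_unique[OF s] by (simp add: divide_inverse mult.commute)
qed

lemma choose_bound:
  assumes "K > 0"
  shows "real (n choose K) \<le> (exp 1 * real n / real K) ^ K"
proof -
  have "(n choose K) * fact K \<le> n ^ K" by (rule binomial_fact_pow)
  then have a: "real (n choose K) * fact K \<le> real n ^ K"
    by (metis of_nat_fact of_nat_le_iff of_nat_mult of_nat_power)
  have fpos: "(0::real) < fact K" by simp
  have Kpos: "(0::real) < real K ^ K" using assms by simp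
  have b: "real K ^ K \<le> exp (real K) * fact K" using fact_bound[of K] fpos by (simp add: divide_le_eq)
  have "real (n choose K) * real K ^ K \<le> real (n choose K) * (exp (real K) * fact K)"
    using b by (intro mult_left_mono) simp_all
  also have "\<dots> = exp (real K) * (real (n choose K) * fact K)" by simp
  also have "\<dots> \<le> exp (real K) * real n ^ K" using a by (intro mult_left_mono) simp_all
  finally have "real (n choose K) \<le> exp (real K) * real n ^ K / real K ^ K"
    using Kpos by (simp add: le_divide_eq)
  also have "\<dots> = (exp 1 * real n / real K) ^ K"
    using exp_of_nat_mult[of K "1::real"] by (simp add: power_divide power_mult_distrib)
  finally show ?thesis .
qed

lemma cnt_bound:
  fixes n D m :: nat
  assumes D: "D \<ge> 1" and nD: "n \<ge> D" and m: "real m > 2048 * real D * ln (real n / real D)"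
  shows "real (n choose (8*D)) * 2^(8*D) * (255/256)^m < 1"
proof -
  define K where "K = 8*D"
  have Kpos: "K > 0" using D by (simp add: K_def)
  have r: "real n / real D \<ge> 1" using nD D by simp
  have "real (n choose K) * 2^K \<le> (exp 1 * real n / real K) ^ K * 2^K"
    using choose_bound[OF Kpos, of n] by (intro mult_right_mono) simp_all
  also have "\<dots> = (2 * exp 1 * real n / real K) ^ K" by (simp add: power_mult_distrib[symmetric] mult_ac)
  also have "\<dots> \<le> (real n / real D) ^ K"
  proof (rule power_mono)
    have "2 * exp 1 \<le> (8::real)" using exp_le by simp
    then have "2 * exp 1 * real n \<le> 8 * real n" by (intro mult_right_mono) simp_all
    then show "2 * exp 1 * real n / real K \<le> real n / real D"
      using D by (simp add: K_def divide_simps mult_ac)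
    show "0 \<le> 2 * exp 1 * real n / real K" by simp
  qed
  also have "\<dots> = exp (real K * ln (real n / real D))"
    using r by (simp add: exp_of_nat_mult)
  finally have A: "real (n choose K) * 2^K \<le> exp (real K * ln (real n / real D))" .
  have "(255/256::real) \<le> exp (-1/256)" using exp_ge_add_one_self[of "-1/256::real"] by simp
  then have "(255/256::real)^m \<le> exp (-1/256)^m" by (rule power_mono) simp
  also have "\<dots> = exp (- real m / 256)" by (simp add: exp_of_nat_mult[symmetric])
  finally have Bd: "(255/256::real)^m \<le> exp (- real m / 256)" .
  have "real (n choose K) * 2^K * (255/256)^m \<le> exp (real K * ln (real n / real D)) * exp (- real m / 256)"
    using A Bd by (intro mult_mono) simp_all
  also have "\<dots> = exp (real K * ln (real n / real D) - real m / 256)" by (simp add: exp_add[symmetric])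
  also have "\<dots> < exp 0"
    using m by (simp add: K_def)
  finally show ?thesis by (simp add: K_def)
qed

lemma frac_bound:
  fixes n D :: nat
  assumes D: "D \<ge> 1" and nK: "n \<ge> 8*D"
  shows "(16*D)^n \<le> 256 * ((D div 8 + 1) * ((16*D-1)^(8*D - 1) * (16*D)^(n - 8*D)))"
proof -
  define B where "B = 16*D"
  define K where "K = 8*D"
  have Bpos: "real B > 0" using D by (simp add: B_def)
  have K1: "K \<ge> 1" using D by (simp add: K_def)
  have s0: "real (D div 8 + 1) \<ge> real D / 8"
  proof -
    have "D < 8 * (D div 8 + 1)" by presburger
    then show ?thesis by linarith
  qed
  have bern: "1 + real (K-1) * (-1 / real B) \<le> (1 + (-1/real B))^(K-1)"
    by (rule Bernoulli_inequality) (use D in \<open>simp add: B_def\<close>)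
  have h1: "1 + real (K-1) * (-1 / real B) \<ge> 1/2"
  proof -
    have "real (K-1) \<le> real B / 2" using K1 by (simp add: K_def B_def)
    then have "real (K-1) / real B \<le> 1/2" using Bpos by (simp add: divide_simps)
    then show ?thesis by simp
  qed
  have eq: "real (B-1) = real B * (1 + (-1/real B))"
    using Bpos D by (simp add: B_def field_simps of_nat_diff)
  have "real B ^ K = real B * real B ^ (K-1)" using K1 by (metis Suc_diff_le diff_Suc_1 power_Suc)
  also have "\<dots> = 2 * real B * (real B ^ (K-1) * (1/2))" by simp
  also have "\<dots> \<le> 256 * real (D div 8 + 1) * (real B ^ (K-1) * (1 + (-1/real B))^(K-1))"
  proof (rule mult_mono)
    show "2 * real B \<le> 256 * real (D div 8 + 1)" using s0 by (simp add: B_def)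
    show "real B ^ (K-1) * (1/2) \<le> real B ^ (K-1) * (1 + (-1/real B))^(K-1)"
    proof (rule mult_left_mono)
      show "1/2 \<le> (1 + (-1/real B))^(K-1)" using bern h1 by linarith
    qed simp
  qed simp_all
  also have "\<dots> = 256 * real (D div 8 + 1) * real (B-1)^(K-1)"
    unfolding eq power_mult_distrib by simp
  finally have a: "real B ^ K \<le> 256 * real (D div 8 + 1) * real (B-1)^(K-1)" .
  have "real B ^ n = real B ^ K * real B ^ (n-K)" using nK by (simp add: K_def power_add[symmetric])
  also have "\<dots> \<le> 256 * real (D div 8 + 1) * real (B-1)^(K-1) * real B ^ (n-K)"
    using a by (intro mult_right_mono) simp_all
  also have "\<dots> = real (256 * ((D div 8 + 1) * ((B-1)^(K - 1) * B^(n - K))))"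
    by (simp only: of_nat_mult of_nat_power of_nat_numeral mult_ac)
  finally have "real (B^n) \<le> real (256 * ((D div 8 + 1) * ((B-1)^(K - 1) * B^(n - K))))"
    by simp
  then show ?thesis unfolding B_def K_def of_nat_le_iff .
qed

definition valid :: "nat \<Rightarrow> nat \<Rightarrow> nat set \<Rightarrow> bool" where
  "valid n D I \<longleftrightarrow> I \<subseteq> {1..n} \<and> real (card I) / 4 \<le> real D \<and> real D \<le> 4 * real (card I)"

definition Inter :: "nat \<Rightarrow> nat \<Rightarrow> nat set list \<Rightarrow> bool list \<Rightarrow> nat set" where
  "Inter n D Qs a = {x. \<forall>I'. valid n D I' \<and> map (test_answer I') Qs = a \<longrightarrow> x \<in> I'}"

definition dec :: "nat \<Rightarrow> nat \<Rightarrow> nat \<Rightarrow> nat set list \<Rightarrow> bool list \<Rightarrow> nat set" where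
  "dec n D l Qs a = (SOME L. L \<subseteq> Inter n D Qs a \<and> card L = l)"

lemma decode_ok:
  assumes v: "valid n D I" and ex: "\<exists>L. L \<subseteq> Inter n D Qs (map (test_answer I) Qs) \<and> card L = l"
  shows "detects Qs (dec n D l Qs) l I"
proof -
  let ?a = "map (test_answer I) Qs"
  have s: "dec n D l Qs ?a \<subseteq> Inter n D Qs ?a \<and> card (dec n D l Qs ?a) = l"
    unfolding dec_def using someI_ex[OF ex] .
  have "Inter n D Qs ?a \<subseteq> I" unfolding Inter_def using v by blast
  then show ?thesis using s unfolding detects_def alg_output_def by blast
qed

lemma cert_ok:
  assumes "C \<subseteq> Inter n D Qs a" "finite C" "l \<le> card C"
  shows "\<exists>L. L \<subseteq> Inter n D Qs a \<and> card L = l"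
proof -
  obtain L where "L \<subseteq> C" "card L = l" using obtain_subset_with_card_n[OF assms(3)] by blast
  then show ?thesis using assms(1) by blast
qed

lemma card_le_n: "I \<subseteq> {1..n} \<Longrightarrow> card I \<le> n"
  using card_mono[of "{1..n}" I] by simp

lemma singleton_ok:
  assumes v: "valid n D I" and lD: "real l \<le> real D / 8"
  shows "\<exists>L. L \<subseteq> Inter n D (map (\<lambda>x. {x}) [1..<n+1]) (map (test_answer I) (map (\<lambda>x. {x}) [1..<n+1])) \<and> card L = l"
proof (rule cert_ok)
  let ?Qs = "map (\<lambda>x. {x}) [1..<n+1]"
  show "I \<subseteq> Inter n D ?Qs (map (test_answer I) ?Qs)"
  proof
    fix x assume xI: "x \<in> I"
    have xn: "x \<in> {1..n}" using v xI unfolding valid_def by blast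
    show "x \<in> Inter n D ?Qs (map (test_answer I) ?Qs)"
      unfolding Inter_def
    proof (clarify)
      fix I' assume v': "valid n D I'" and eqm: "map (test_answer I') ?Qs = map (test_answer I) ?Qs"
      have "{x} \<in> set ?Qs" using xn by auto
      then have "test_answer I' {x} = test_answer I {x}" using eqm by (simp only: map_eq_conv)
      then show "x \<in> I'" using xI unfolding test_answer_def by auto
    qed
  qed
  show "finite I" using v unfolding valid_def using finite_subset by blast
  show "l \<le> card I" using v lD unfolding valid_def by linarith
qed

lemma ext_prop:
  fixes G :: "nat \<Rightarrow> nat \<Rightarrow> nat"
  assumes hp: "\<forall>U S. U \<subseteq> {1..n} \<and> card U = K \<and> S \<subseteq> U \<and> card S = s0 \<longrightarrow>
            (\<exists>i<m. \<exists>x\<in>S. G i x = 0 \<and> (\<forall>w\<in>U-{x}. G i w \<noteq> 0))"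
  and nK: "K \<le> n" and U: "U \<subseteq> {1..n}" "card U \<le> K" and S: "S \<subseteq> U" "s0 \<le> card S"
  shows "\<exists>i<m. \<exists>x\<in>S. G i x = 0 \<and> (\<forall>w\<in>U-{x}. G i w \<noteq> 0)"
proof -
  obtain S' where S': "S' \<subseteq> S" "card S' = s0" using obtain_subset_with_card_n[OF S(2)] by blast
  have finU: "finite U" using U(1) finite_subset by blast
  have "card ({1..n} - U) = n - card U" using U(1) finU by (simp add: card_Diff_subset)
  then have "K - card U \<le> card ({1..n} - U)" using nK by simp
  then obtain V where V: "V \<subseteq> {1..n} - U" "card V = K - card U" "finite V"
    using obtain_subset_with_card_n by blast
  have "card (U \<union> V) = card U + card V" using V finU by (subst card_Un_disjoint) auto
  then have cUV: "card (U \<union> V) = K" using V(2) U(2) by simp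
  have "U \<union> V \<subseteq> {1..n}" using U(1) V(1) by blast
  moreover have "S' \<subseteq> U \<union> V" using S' S by blast
  ultimately obtain i x where "i < m" "x \<in> S'" "G i x = 0" "\<forall>w\<in>(U \<union> V)-{x}. G i w \<noteq> 0"
    using hp cUV S'(2) by blast
  then show ?thesis using S'(1) by blast
qed

lemma rand_correct:
  fixes G :: "nat \<Rightarrow> nat \<Rightarrow> nat"
  assumes hp: "\<forall>U S. U \<subseteq> {1..n} \<and> card U = 8*D \<and> S \<subseteq> U \<and> card S = D div 8 + 1 \<longrightarrow>
            (\<exists>i<m. \<exists>x\<in>S. G i x = 0 \<and> (\<forall>w\<in>U-{x}. G i w \<noteq> 0))"
  and D8: "D \<ge> 8" and nK: "8*D \<le> n" and lD: "real l \<le> real D / 8" and v: "valid n D I"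
  shows "\<exists>L. L \<subseteq> Inter n D (map (\<lambda>i. {x\<in>{1..n}. G i x = 0}) [0..<m])
              (map (test_answer I) (map (\<lambda>i. {x\<in>{1..n}. G i x = 0}) [0..<m])) \<and> card L = l"
proof -
  define Q where "Q = (\<lambda>i. {x\<in>{1..n}. G i x = 0})"
  define Qs where "Qs = map Q [0..<m]"
  define d where "d = card I"
  have In: "I \<subseteq> {1..n}" using v unfolding valid_def by blast
  have finI: "finite I" using In finite_subset by blast
  have dD: "real d / 4 \<le> real D" "real D \<le> 4 * real d" using v unfolding valid_def d_def by auto
  have s0d: "D div 8 + 1 \<le> d"
  proof -
    have "real (D div 8) \<le> real D / 8" by linarith
    then show ?thesis using dD D8 by linarith
  qed
  have d4: "2 * d \<le> 8 * D" using dD by linarith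
  define Y where "Y = {y \<in> {1..n} - I. \<forall>i<m. G i y = 0 \<longrightarrow> (\<exists>w\<in>I. G i w = 0)}"
  have Yn: "Y \<subseteq> {1..n}" unfolding Y_def by blast
  have finY: "finite Y" using Yn finite_subset by blast
  have YI: "Y \<inter> I = {}" unfolding Y_def by blast
  have cY: "card Y < d"
  proof (rule ccontr)
    assume "\<not> card Y < d"
    then obtain Z where Z: "Z \<subseteq> Y" "card Z = d" "finite Z" using obtain_subset_with_card_n[of d Y] by auto
    have "card (I \<union> Z) = card I + card Z" using Z YI finI by (subst card_Un_disjoint) auto
    then have cU: "card (I \<union> Z) \<le> 8 * D" using Z d4 d_def by simp
    have "I \<union> Z \<subseteq> {1..n}" using In Z Yn by blast
    then obtain i x where ix: "i < m" "x \<in> Z" "G i x = 0" "\<forall>w\<in>(I \<union> Z)-{x}. G i w \<noteq> 0"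
      using ext_prop[OF hp nK _ cU, of Z] Z s0d by blast
    have "x \<in> Y" using ix Z by blast
    then obtain w where "w \<in> I" "G i w = 0" using ix unfolding Y_def by blast
    moreover have "x \<notin> I" using \<open>x \<in> Y\<close> YI by blast
    ultimately show False using ix by blast
  qed
  define Cert where "Cert = {x\<in>I. \<exists>i<m. G i x = 0 \<and> (\<forall>w\<in>(I \<union> Y)-{x}. G i w \<noteq> 0)}"
  have finC: "finite Cert" unfolding Cert_def using finI by simp
  have cC: "l \<le> card Cert"
  proof (rule ccontr)
    assume "\<not> l \<le> card Cert"
    then have lt: "card Cert < l" by simp
    have CI: "Cert \<subseteq> I" unfolding Cert_def by blast
    have "card (I - Cert) = d - card Cert" using CI finC d_def by (simp add: card_Diff_subset)
    moreover have "real l \<le> real d / 2" using lD dD by linarith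
    ultimately have sS: "D div 8 + 1 \<le> card (I - Cert)"
    proof -
      assume a: "card (I - Cert) = d - card Cert" "real l \<le> real d / 2"
      have "real (D div 8) \<le> real D / 8" by linarith
      moreover have "card Cert + 1 \<le> l" using lt by simp
      ultimately show ?thesis using a dD lt by linarith
    qed
    have "card (I \<union> Y) \<le> card I + card Y" by (rule card_Un_le)
    then have cU: "card (I \<union> Y) \<le> 8 * D" using cY d4 d_def by linarith
    have "I \<union> Y \<subseteq> {1..n}" using In Yn by blast
    then obtain i x where ix: "i < m" "x \<in> I - Cert" "G i x = 0" "\<forall>w\<in>(I \<union> Y)-{x}. G i w \<noteq> 0"
      using ext_prop[OF hp nK _ cU, of "I - Cert"] sS by blast
    then have "x \<in> Cert" unfolding Cert_def by blast
    then show False using ix by blast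
  qed
  have CInt: "Cert \<subseteq> Inter n D Qs (map (test_answer I) Qs)"
  proof
    fix x assume "x \<in> Cert"
    then obtain i where xi: "x \<in> I" "i < m" "G i x = 0" "\<forall>w\<in>(I \<union> Y)-{x}. G i w \<noteq> 0"
      unfolding Cert_def by blast
    show "x \<in> Inter n D Qs (map (test_answer I) Qs)"
      unfolding Inter_def
    proof (clarify)
      fix I' assume v': "valid n D I'" and eqm: "map (test_answer I') Qs = map (test_answer I) Qs"
      have eqt: "test_answer I' (Q j) = test_answer I (Q j)" if "j < m" for j
      proof -
        have "Q j \<in> set Qs" unfolding Qs_def using that by simp
        then show ?thesis using eqm by (simp only: map_eq_conv)
      qed
      have I'n: "I' \<subseteq> {1..n}" using v' unfolding valid_def by blast
      have "x \<in> Q i" unfolding Q_def using xi In by blast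
      then have "test_answer I (Q i)" using xi unfolding test_answer_def by blast
      then have "test_answer I' (Q i)" using eqt xi by simp
      then obtain w where w: "w \<in> I'" "w \<in> Q i" unfolding test_answer_def by blast
      have "w = x"
      proof (rule ccontr)
        assume wx: "w \<noteq> x"
        have wn: "w \<in> {1..n}" "G i w = 0" using w unfolding Q_def by auto
        then have "w \<notin> I \<union> Y" using xi wx by blast
        then have "w \<notin> I" "w \<notin> Y" by auto
        then obtain j where j: "j < m" "G j w = 0" "\<not> (\<exists>u\<in>I. G j u = 0)"
          using wn unfolding Y_def by blast
        have "\<not> test_answer I (Q j)" using j unfolding test_answer_def Q_def by blast
        then have "\<not> test_answer I' (Q j)" using eqt j by simp
        moreover have "w \<in> Q j" using j wn unfolding Q_def by blast
        ultimately show False using w unfolding test_answer_def by blast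
      qed
      then show "x \<in> I'" using w by simp
    qed
  qed
  show ?thesis using cert_ok[OF CInt finC cC] unfolding Qs_def Q_def .
qed

lemma bound_nonneg:
  assumes "I \<subseteq> {1..n}"
  shows "0 \<le> real (card I) * (log 2 (real n / real (card I)) + 1)"
proof (cases "card I = 0")
  case True then show ?thesis by simp
next
  case False
  have "card I \<le> n" using card_le_n[OF assms] .
  then have "1 \<le> real n / real (card I)" using False by simp
  then have "0 \<le> log 2 (real n / real (card I))" by simp
  then show ?thesis by simp
qed

lemma ln_le_log2: "1 \<le> (x::real) \<Longrightarrow> ln x \<le> log 2 x"
proof -
  assume x: "1 \<le> x"
  have l2: "0 < ln (2::real)" "ln (2::real) \<le> 1"
    using ln_le_minus_one[of 2] by simp_all
  have "0 \<le> ln x" using x by simp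
  then have "ln x * ln 2 \<le> ln x" using l2 by (simp add: mult_left_le)
  then show ?thesis using l2 by (simp add: log_def le_divide_eq)
qed

lemma l4: "log 2 (4::real) = 2"
proof -
  have "(4::real) = 2 powr 2" by simp
  moreover have "log 2 ((2::real) powr 2) = 2" by (rule log_powr_cancel) simp_all
  ultimately show ?thesis by simp
qed

lemma len_bound:
  fixes n D d m :: nat
  assumes D: "D \<ge> 1" and dD: "real d / 4 \<le> real D" "real D \<le> 4 * real d" and dn: "d \<le> n"
    and nD: "n \<ge> D"
    and m: "real m \<le> 2048 * real D * ln (real n / real D) + 2"
  shows "real m \<le> 20000 * real d * (log 2 (real n / real d) + 1)"
proof -
  have dpos: "real d > 0" using dD D by linarith
  define L where "L = log 2 (real n / real d)"
  have L0: "0 \<le> L" unfolding L_def using dn dpos by simp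
  have r1: "1 \<le> real n / real D" using nD D by simp
  have "ln (real n / real D) \<le> log 2 (real n / real D)" by (rule ln_le_log2[OF r1])
  also have "\<dots> \<le> log 2 (4 * (real n / real d))"
  proof -
    have "real n / real D \<le> 4 * (real n / real d)"
      using dD dpos D by (simp add: divide_simps) (metis mult.commute mult_left_mono of_nat_0_le_iff mult.assoc)
    moreover have "0 < real n / real D" using r1 by linarith
    ultimately show ?thesis by simp
  qed
  also have "\<dots> = 2 + L" unfolding L_def using dpos dn
    by (subst log_mult) (auto simp: divide_pos_pos l4)
  finally have lnb: "ln (real n / real D) \<le> L + 2" by simp
  have "real m \<le> 2048 * real D * (L + 2) + 2"
    using m lnb D by (smt (verit) mult_left_mono of_nat_0_le_iff mult_nonneg_nonneg)
  also have "\<dots> \<le> 2048 * (4 * real d) * (2 * (L + 1)) + 2 * real d * (L + 1)"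
  proof -
    have a: "2048 * real D * (L + 2) \<le> 2048 * (4 * real d) * (2 * (L + 1))"
      using dD L0 by (intro mult_mono) auto
    have "1 \<le> real d" using dpos by simp
    then have "2 \<le> 2 * real d * (L + 1)" using L0
      by (smt (verit) mult_le_cancel_left1 mult_nonneg_nonneg)
    then show ?thesis using a by linarith
  qed
  also have "\<dots> = 16386 * real d * (L + 1)" by (simp add: algebra_simps)
  also have "\<dots> \<le> 20000 * real d * (L + 1)" using L0 dpos by (intro mult_right_mono) auto
  finally show ?thesis unfolding L_def .
qed

theorem theorem8:
  "\<exists>C::real. C > 0 \<and>
     (\<forall>(n::nat) (D::nat) (l::nat). real l \<le> real D / 8 \<longrightarrow>
        (\<exists>(Qs :: nat set list) (f :: bool list \<Rightarrow> nat set).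
           nonadaptive_alg n Qs \<and>
           (\<forall>I. I \<subseteq> {1..n} \<and> real (card I) / 4 \<le> real D \<and> real D \<le> 4 * real (card I) \<longrightarrow>
                detects Qs f l I \<and>
                real (length Qs) \<le> C * real (card I) * (log 2 (real n / real (card I)) + 1))))"
proof (intro exI[of _ 20000] conjI allI impI)
  show "(0::real) < 20000" by simp
  fix n D l :: nat
  assume lD: "real l \<le> real D / 8"
  show "\<exists>(Qs :: nat set list) (f :: bool list \<Rightarrow> nat set).
           nonadaptive_alg n Qs \<and>
           (\<forall>I. I \<subseteq> {1..n} \<and> real (card I) / 4 \<le> real D \<and> real D \<le> 4 * real (card I) \<longrightarrow>
                detects Qs f l I \<and>
                real (length Qs) \<le> 20000 * real (card I) * (log 2 (real n / real (card I)) + 1))"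
  proof (cases "l = 0")
    case True
    show ?thesis
    proof (intro exI[of _ "[]"] exI[of _ "\<lambda>_. {}"] conjI allI impI)
      show "nonadaptive_alg n []" unfolding nonadaptive_alg_def by simp
      fix I assume I: "I \<subseteq> {1..n} \<and> real (card I) / 4 \<le> real D \<and> real D \<le> 4 * real (card I)"
      show "detects [] (\<lambda>_. {}) l I" unfolding detects_def alg_output_def using True by simp
      show "real (length ([]::nat set list)) \<le> 20000 * real (card I) * (log 2 (real n / real (card I)) + 1)"
        using bound_nonneg[of I n] I by simp
    qed
  next
    case False
    then have "1 \<le> real l" by simp
    then have "8 \<le> real D" using lD by linarith
    then have D8: "D \<ge> 8" by simp
    show ?thesis
    proof (cases "n \<le> 64 * D")
      case True
      let ?Qs = "map (\<lambda>x. {x}) [1..<n+1]"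
      show ?thesis
      proof (intro exI[of _ ?Qs] exI[of _ "dec n D l ?Qs"] conjI allI impI)
        show "nonadaptive_alg n ?Qs" unfolding nonadaptive_alg_def by auto
        fix I assume I: "I \<subseteq> {1..n} \<and> real (card I) / 4 \<le> real D \<and> real D \<le> 4 * real (card I)"
        then have v: "valid n D I" unfolding valid_def by blast
        show "detects ?Qs (dec n D l ?Qs) l I" by (rule decode_ok[OF v singleton_ok[OF v lD]])
        have "card I \<le> n" using card_le_n I by blast
        then have "0 \<le> log 2 (real n / real (card I))" using I D8 by simp
        then have "real (card I) \<le> real (card I) * (log 2 (real n / real (card I)) + 1)"
          by (simp add: mult_le_cancel_left1)
        moreover have "real n \<le> 256 * real (card I)" using True I by linarith
        ultimately show "real (length ?Qs) \<le> 20000 * real (card I) * (log 2 (real n / real (card I)) + 1)"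
          by simp
      qed
    next
      case False
      define m where "m = nat \<lceil>2048 * real D * ln (real n / real D)\<rceil> + 1"
      have mgt: "real m > 2048 * real D * ln (real n / real D)" unfolding m_def by linarith
      have mle: "real m \<le> 2048 * real D * ln (real n / real D) + 2"
      proof -
        have "0 \<le> ln (real n / real D)" using False D8 by simp
        then have "0 \<le> 2048 * real D * ln (real n / real D)" by simp
        then show ?thesis unfolding m_def by linarith
      qed
      have nK: "8 * D \<le> n" using False by simp
      obtain G :: "nat \<Rightarrow> nat \<Rightarrow> nat" where G: "\<forall>U S. U \<subseteq> {1..n} \<and> card U = 8*D \<and> S \<subseteq> U \<and> card S = D div 8 + 1 \<longrightarrow>
            (\<exists>i<m. \<exists>x\<in>S. G i x = 0 \<and> (\<forall>w\<in>U-{x}. G i w \<noteq> 0))"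
      proof -
        have "\<exists>G::nat \<Rightarrow> nat \<Rightarrow> nat. \<forall>U S. U \<subseteq> {1..n} \<and> card U = 8*D \<and> S \<subseteq> U \<and> card S = D div 8 + 1 \<longrightarrow>
            (\<exists>i<m. \<exists>x\<in>S. G i x = 0 \<and> (\<forall>w\<in>U-{x}. G i w \<noteq> 0))"
        proof (rule design_exists[where B = "16*D"])
          show "0 < 16 * D" using D8 by simp
          show "(16*D)^n \<le> 256 * ((D div 8 + 1) * ((16*D-1)^(8*D - 1) * (16*D)^(n - 8*D)))"
            by (rule frac_bound) (use D8 nK in simp_all)
          show "real (n choose (8*D)) * 2^(8*D) * (255/256)^m < 1"
            by (rule cnt_bound) (use D8 False mgt in simp_all)
        qed
        then show ?thesis using that by blast
      qed
      let ?Qs = "map (\<lambda>i. {x\<in>{1..n}. G i x = 0}) [0..<m]"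
      show ?thesis
      proof (intro exI[of _ ?Qs] exI[of _ "dec n D l ?Qs"] conjI allI impI)
        show "nonadaptive_alg n ?Qs" unfolding nonadaptive_alg_def by auto
        fix I assume I: "I \<subseteq> {1..n} \<and> real (card I) / 4 \<le> real D \<and> real D \<le> 4 * real (card I)"
        then have v: "valid n D I" unfolding valid_def by blast
        show "detects ?Qs (dec n D l ?Qs) l I" by (rule decode_ok[OF v rand_correct[OF G D8 nK lD v]])
        have "card I \<le> n" using card_le_n I by blast
        then show "real (length ?Qs) \<le> 20000 * real (card I) * (log 2 (real n / real (card I)) + 1)"
          using len_bound[of D "card I" n m] I D8 False mle by simp
      qed
    qed
  qed
qed

end
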